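(* Let $\delta:\,]0,+\infty[\to\mathbb R$ be continuously differentiable, nonnegative and bounded. Then for every $r_A,r_B>0$ and every $T>0$ there exists a unique solution $r:[-T,0]\to\,]0,+\infty[$ of $\ddot r+\delta(r)\dot r=-1/r^2$ with $r(-T)=r_A$ and $r(0)=r_B$. *)

theory Defs
  imports "HOL-Analysis.Analysis"
begin

definition bvp_solution ::
  "(real \<Rightarrow> real) \<Rightarrow> real \<Rightarrow> real \<Rightarrow> real \<Rightarrow> (real \<Rightarrow> real) \<Rightarrow> bool" where
  "bvp_solution \<delta> T rA rB r \<longleftrightarrow>
     (\<forall>t\<in>{-T..0}. r t > 0) \<and> r (-T) = rA \<and> r 0 = rB \<and>
     (\<exists>r' r''. \<forall>t\<in>{-T..0}.
        (r has_real_derivative r' t) (at t within {-T..0}) \<and>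
        (r' has_real_derivative r'' t) (at t within {-T..0}) \<and>
        r'' t + \<delta> (r t) * r' t = - 1 / (r t)^2)"

end

theory Submission
  imports Defs
begin

lemma cont_lip2:
  fixes F :: "real \<Rightarrow> real \<Rightarrow> real"
  assumes f: "continuous_on S f" and g: "continuous_on S g"
    and L: "\<And>x y u w. \<bar>F x y - F u w\<bar> \<le> K*(\<bar>x-u\<bar>+\<bar>y-w\<bar>)"
  shows "continuous_on S (\<lambda>s. F (f s) (g s))"
  unfolding continuous_on_def
proof
  fix x assume x: "x \<in> S"
  have ff: "(f \<longlongrightarrow> f x) (at x within S)" "(g \<longlongrightarrow> g x) (at x within S)"
    using f g x by (auto simp: continuous_on_def)
  have "((\<lambda>s. K*(\<bar>f s - f x\<bar>+\<bar>g s - g x\<bar>)) \<longlongrightarrow> K*(\<bar>f x - f x\<bar>+\<bar>g x - g x\<bar>)) (at x within S)"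
    by (intro tendsto_intros ff)
  then have "((\<lambda>s. K*(\<bar>f s - f x\<bar>+\<bar>g s - g x\<bar>)) \<longlongrightarrow> 0) (at x within S)" by simp
  then have "((\<lambda>s. F (f s) (g s) - F (f x) (g x)) \<longlongrightarrow> 0) (at x within S)"
    by (rule Lim_null_comparison[rotated]) (auto intro!: always_eventually L)
  then show "((\<lambda>s. F (f s) (g s)) \<longlongrightarrow> F (f x) (g x)) (at x within S)"
    by (rule LIM_zero_cancel)
qed

definition clampI :: "real \<Rightarrow> real \<Rightarrow> real \<Rightarrow> real" where
  "clampI a b t = max a (min t b)"

lemma clampI_in: "a \<le> b \<Longrightarrow> clampI a b t \<in> {a..b}"
  by (auto simp: clampI_def)

lemma clampI_id: "t \<in> {a..b} \<Longrightarrow> clampI a b t = t"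
  by (auto simp: clampI_def)

lemma continuous_clampI: "continuous_on S (clampI a b)"
  unfolding clampI_def by (intro continuous_intros)

lemma bcontfun_clamp:
  fixes \<psi> :: "real \<Rightarrow> real"
  assumes "a \<le> b" "continuous_on {a..b} \<psi>"
  shows "(\<lambda>t. \<psi> (clampI a b t)) \<in> bcontfun"
proof -
  have c: "continuous_on UNIV (\<lambda>t. \<psi> (clampI a b t))"
    by (rule continuous_on_compose2[OF assms(2) continuous_clampI]) (use clampI_in assms(1) in auto)
  have "range (\<lambda>t. \<psi> (clampI a b t)) \<subseteq> \<psi> ` {a..b}"
    using clampI_in[OF assms(1)] by auto
  moreover have "bounded (\<psi> ` {a..b})"
    by (intro compact_imp_bounded compact_continuous_image assms(2)) auto
  ultimately have "bounded (range (\<lambda>t. \<psi> (clampI a b t)))" by (rule bounded_subset[rotated])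
  with c show ?thesis by (simp add: bcontfun_def)
qed

lemma sq_lem: "(x::real)\<^sup>2 \<le> (z/4)\<^sup>2 \<Longrightarrow> y\<^sup>2 \<le> (z/4)\<^sup>2 \<Longrightarrow> x\<^sup>2 + y\<^sup>2 \<le> (z/2)\<^sup>2"
proof -
  assume h: "x\<^sup>2 \<le> (z/4)\<^sup>2" "y\<^sup>2 \<le> (z/4)\<^sup>2"
  have z: "z\<^sup>2 \<ge> 0" by simp
  have "(z/4)\<^sup>2 = z\<^sup>2/16" "(z/2)\<^sup>2 = z\<^sup>2/4" by (simp_all add: power_divide)
  with h z show ?thesis by linarith
qed

lemma exp_integral_bound:
  fixes G :: "real \<Rightarrow> real"
  assumes L: "L > 0" and u: "a \<le> u" and G: "continuous_on {a..u} G"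
    and bd: "\<And>s. s \<in> {a..u} \<Longrightarrow> \<bar>G s\<bar> \<le> C * exp (L*(s-a))"
  shows "\<bar>integral {a..u} G\<bar> \<le> C * exp (L*(u-a)) / L"
proof -
  have d: "((\<lambda>s. C * exp (L*(s-a)) / L) has_vector_derivative C * exp (L*(x-a))) (at x within {a..u})" for x
    using L by (auto intro!: derivative_eq_intros simp: has_real_derivative_iff_has_vector_derivative[symmetric])
  have hi: "((\<lambda>s. C * exp (L*(s-a))) has_integral (C * exp (L*(u-a)) / L - C * exp (L*(a-a)) / L)) {a..u}"
    by (rule fundamental_theorem_of_calculus[OF u]) (use d in auto)
  have "norm (integral {a..u} G) \<le> integral {a..u} (\<lambda>s. C * exp (L*(s-a)))"
    by (rule integral_norm_bound_integral) (use hi G bd integrable_continuous_real in auto)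
  also have "\<dots> = C * exp (L*(u-a)) / L - C / L" using integral_unique[OF hi] by simp
  also have "\<dots> \<le> C * exp (L*(u-a)) / L"
  proof -
    have "\<bar>G a\<bar> \<le> C * exp (L*(a-a))" using bd[of a] u by auto
    then have "C \<ge> 0" by simp
    then show ?thesis using L by simp
  qed
  finally show ?thesis by simp
qed

lemma ivp:
  fixes F1 F2 :: "real \<Rightarrow> real \<Rightarrow> real" and a b K r0 :: real
  assumes ab: "a \<le> b" and K: "K \<ge> 0"
    and L1: "\<And>x y u w. \<bar>F1 x y - F1 u w\<bar> \<le> K*(\<bar>x-u\<bar>+\<bar>y-w\<bar>)"
    and L2: "\<And>x y u w. \<bar>F2 x y - F2 u w\<bar> \<le> K*(\<bar>x-u\<bar>+\<bar>y-w\<bar>)"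
  shows "\<exists>R P. (\<forall>v. \<forall>t\<in>{a..b}. R v t = r0 + integral {a..t} (\<lambda>s. F1 (R v s) (P v s)) \<and>
                                 P v t = v + integral {a..t} (\<lambda>s. F2 (R v s) (P v s)))
           \<and> (\<forall>v. continuous_on UNIV (R v) \<and> continuous_on UNIV (P v))
           \<and> continuous_on UNIV (\<lambda>v. R v b)"
proof -
  define L where "L = 8*K+1"
  have L0: "L > 0" and LK: "8*K \<le> L" using K by (auto simp: L_def)
  define E where "E t = exp (L*(clampI a b t - a))" for t
  have E1: "E t \<ge> 1" for t using clampI_in[OF ab, of t] L0 by (auto simp: E_def)
  have Eid: "t \<in> {a..b} \<Longrightarrow> E t = exp (L*(t-a))" for t by (simp add: E_def clampI_id)
  have contE: "continuous_on S E" for S unfolding E_def by (intro continuous_intros continuous_clampI)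
  define RR where "RR Y s = E s * apply_bcontfun (fst Y) s" for Y :: "(real \<Rightarrow>\<^sub>C real) \<times> (real \<Rightarrow>\<^sub>C real)" and s
  define PP where "PP Y s = E s * apply_bcontfun (snd Y) s" for Y :: "(real \<Rightarrow>\<^sub>C real) \<times> (real \<Rightarrow>\<^sub>C real)" and s
  have cRR: "continuous_on S (RR Y)" "continuous_on S (PP Y)" for S Y
    unfolding RR_def PP_def by (auto intro!: continuous_intros contE)
  have cF1: "continuous_on S (\<lambda>s. F1 (RR Y s) (PP Y s))" for S Y
    by (rule cont_lip2[OF cRR L1])
  have cF2: "continuous_on S (\<lambda>s. F2 (RR Y s) (PP Y s))" for S Y
    by (rule cont_lip2[OF cRR L2])
  define \<psi>1 where "\<psi>1 Y u = (r0 + integral {a..u} (\<lambda>s. F1 (RR Y s) (PP Y s))) / exp (L*(u-a))" for Y u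
  define \<psi>2 where "\<psi>2 v Y u = (v + integral {a..u} (\<lambda>s. F2 (RR Y s) (PP Y s))) / exp (L*(u-a))" for v Y u
  have c\<psi>1: "continuous_on {a..b} (\<psi>1 Y)" for Y
    unfolding \<psi>1_def
    by (intro continuous_intros indefinite_integral_continuous_1 integrable_continuous_real cF1) auto
  have c\<psi>2: "continuous_on {a..b} (\<psi>2 v Y)" for v Y
    unfolding \<psi>2_def
    by (intro continuous_intros indefinite_integral_continuous_1 integrable_continuous_real cF2) auto
  define \<Phi> where "\<Phi> v Y = (Bcontfun (\<lambda>t. \<psi>1 Y (clampI a b t)), Bcontfun (\<lambda>t. \<psi>2 v Y (clampI a b t)))" for v Y
  have app1: "apply_bcontfun (fst (\<Phi> v Y)) t = \<psi>1 Y (clampI a b t)" for v Y t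
    unfolding \<Phi>_def using bcontfun_clamp[OF ab c\<psi>1] by (simp add: Bcontfun_inverse)
  have app2: "apply_bcontfun (snd (\<Phi> v Y)) t = \<psi>2 v Y (clampI a b t)" for v Y t
    unfolding \<Phi>_def using bcontfun_clamp[OF ab c\<psi>2] by (simp add: Bcontfun_inverse)
  have est: "\<bar>integral {a..u} (\<lambda>s. F (RR Y s) (PP Y s) - F (RR Z s) (PP Z s))\<bar> / exp (L*(u-a)) \<le> dist Y Z / 4"
    if u: "u \<in> {a..b}" and LF: "\<And>x y u w. \<bar>F x y - F u w\<bar> \<le> K*(\<bar>x-u\<bar>+\<bar>y-w\<bar>)" for F Y Z u
  proof -
    define d where "d = dist Y Z"
    have cF: "continuous_on S (\<lambda>s. F (RR Y s) (PP Y s) - F (RR Z s) (PP Z s))" for S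
      by (intro continuous_intros cont_lip2[OF cRR LF])
    have "\<bar>integral {a..u} (\<lambda>s. F (RR Y s) (PP Y s) - F (RR Z s) (PP Z s))\<bar> \<le> (2*K*d) * exp (L*(u-a)) / L"
    proof (rule exp_integral_bound[OF L0 _ cF])
      show "a \<le> u" using u by auto
      fix s assume s: "s \<in> {a..u}"
      have es: "E s = exp (L*(s-a))" using s u by (intro Eid) auto
      have d1: "\<bar>apply_bcontfun (fst Y) s - apply_bcontfun (fst Z) s\<bar> \<le> d"
        using dist_bounded[of "fst Y" s "fst Z"] dist_fst_le[of Y Z] by (simp add: d_def dist_real_def)
      have d2: "\<bar>apply_bcontfun (snd Y) s - apply_bcontfun (snd Z) s\<bar> \<le> d"
        using dist_bounded[of "snd Y" s "snd Z"] dist_snd_le[of Y Z] by (simp add: d_def dist_real_def)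
      have e: "\<bar>RR Y s - RR Z s\<bar>+\<bar>PP Y s - PP Z s\<bar> = E s * (\<bar>apply_bcontfun (fst Y) s - apply_bcontfun (fst Z) s\<bar> + \<bar>apply_bcontfun (snd Y) s - apply_bcontfun (snd Z) s\<bar>)"
        using E1[of s] by (simp add: RR_def PP_def right_diff_distrib[symmetric] abs_mult distrib_left)
      have "\<dots> \<le> E s * (2*d)" using d1 d2 E1[of s] by (intro mult_left_mono) auto
      then have "K*(\<bar>RR Y s - RR Z s\<bar>+\<bar>PP Y s - PP Z s\<bar>) \<le> K*(E s * (2*d))"
        using e K by (simp add: mult_left_mono)
      then show "\<bar>F (RR Y s) (PP Y s) - F (RR Z s) (PP Z s)\<bar> \<le> 2*K*d * exp (L*(s-a))"
        using LF[of "RR Y s" "PP Y s" "RR Z s" "PP Z s"] es by (simp add: mult_ac)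
    qed
    also have "\<dots> \<le> (d/4) * exp (L*(u-a))"
    proof -
      have d0: "d \<ge> 0" by (simp add: d_def)
      have "8*K*d \<le> L*d" using mult_right_mono[OF LK d0] .
      then have "8*K*d / L \<le> L*d/L" using L0 by (intro divide_right_mono) auto
      then have "2*K*d / L \<le> d/4" using L0 by simp
      then have "(2*K*d / L) * exp (L*(u-a)) \<le> (d/4) * exp (L*(u-a))"
        by (intro mult_right_mono) auto
      then show ?thesis by simp
    qed
    finally show ?thesis by (simp add: d_def divide_simps)
  qed
  have contr: "dist (\<Phi> v Y) (\<Phi> v Z) \<le> 1/2 * dist Y Z" for v Y Z
  proof -
    have h1: "dist (fst (\<Phi> v Y)) (fst (\<Phi> v Z)) \<le> dist Y Z / 4"
    proof (rule dist_bound)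
      fix t
      define u where "u = clampI a b t"
      have u: "u \<in> {a..b}" using clampI_in[OF ab] by (simp add: u_def)
      have "\<psi>1 Y u - \<psi>1 Z u = integral {a..u} (\<lambda>s. F1 (RR Y s) (PP Y s) - F1 (RR Z s) (PP Z s)) / exp (L*(u-a))"
        unfolding \<psi>1_def using u
        by (simp add: integral_diff integrable_continuous_real cF1 diff_divide_distrib[symmetric])
      then show "dist (apply_bcontfun (fst (\<Phi> v Y)) t) (apply_bcontfun (fst (\<Phi> v Z)) t) \<le> dist Y Z / 4"
        using est[OF u L1, of Y Z] by (simp add: app1 dist_real_def u_def[symmetric])
    qed
    have h2: "dist (snd (\<Phi> v Y)) (snd (\<Phi> v Z)) \<le> dist Y Z / 4"
    proof (rule dist_bound)
      fix t
      define u where "u = clampI a b t"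
      have u: "u \<in> {a..b}" using clampI_in[OF ab] by (simp add: u_def)
      have "\<psi>2 v Y u - \<psi>2 v Z u = integral {a..u} (\<lambda>s. F2 (RR Y s) (PP Y s) - F2 (RR Z s) (PP Z s)) / exp (L*(u-a))"
        unfolding \<psi>2_def using u
        by (simp add: integral_diff integrable_continuous_real cF2 diff_divide_distrib[symmetric])
      then show "dist (apply_bcontfun (snd (\<Phi> v Y)) t) (apply_bcontfun (snd (\<Phi> v Z)) t) \<le> dist Y Z / 4"
        using est[OF u L2, of Y Z] by (simp add: app2 dist_real_def u_def[symmetric])
    qed
    have "dist (\<Phi> v Y) (\<Phi> v Z) = sqrt ((dist (fst (\<Phi> v Y)) (fst (\<Phi> v Z)))\<^sup>2 + (dist (snd (\<Phi> v Y)) (snd (\<Phi> v Z)))\<^sup>2)"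
      by (cases "\<Phi> v Y", cases "\<Phi> v Z") (simp add: dist_Pair_Pair)
    also have "\<dots> \<le> sqrt ((dist Y Z / 2)\<^sup>2)"
    proof (intro real_sqrt_le_mono)
      have "(dist (fst (\<Phi> v Y)) (fst (\<Phi> v Z)))\<^sup>2 \<le> (dist Y Z / 4)\<^sup>2" using h1 by (intro power_mono) auto
      moreover have "(dist (snd (\<Phi> v Y)) (snd (\<Phi> v Z)))\<^sup>2 \<le> (dist Y Z / 4)\<^sup>2" using h2 by (intro power_mono) auto
      ultimately show "(dist (fst (\<Phi> v Y)) (fst (\<Phi> v Z)))\<^sup>2 + (dist (snd (\<Phi> v Y)) (snd (\<Phi> v Z)))\<^sup>2 \<le> (dist Y Z / 2)\<^sup>2"
        by (rule sq_lem)
    qed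
    also have "\<dots> = 1/2 * dist Y Z" by simp
    finally show ?thesis .
  qed
  have ex1: "\<exists>!Y. \<Phi> v Y = Y" for v
    using banach_fix_type[of "1/2" "\<Phi> v"] contr by auto
  define fx where "fx v = (THE Y. \<Phi> v Y = Y)" for v
  have fx: "\<Phi> v (fx v) = fx v" for v unfolding fx_def by (rule theI'[OF ex1])
  have dep: "dist (\<Phi> v Y) (\<Phi> w Y) \<le> \<bar>v - w\<bar>" for v w Y
  proof -
    have h2: "dist (snd (\<Phi> v Y)) (snd (\<Phi> w Y)) \<le> \<bar>v - w\<bar>"
    proof (rule dist_bound)
      fix t
      define u where "u = clampI a b t"
      have u: "u \<in> {a..b}" using clampI_in[OF ab] by (simp add: u_def)
      have e1: "exp (L*(u-a)) \<ge> 1" using u L0 by auto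
      have "\<psi>2 v Y u - \<psi>2 w Y u = (v - w) / exp (L*(u-a))"
        unfolding \<psi>2_def diff_divide_distrib[symmetric] by simp
      moreover have "\<bar>(v - w) / exp (L*(u-a))\<bar> \<le> \<bar>v - w\<bar>"
      proof -
        have "\<bar>v - w\<bar> / exp (L*(u-a)) \<le> \<bar>v - w\<bar> / 1" using e1 by (intro divide_left_mono) auto
        moreover have "\<bar>(v - w) / exp (L*(u-a))\<bar> = \<bar>v - w\<bar> / exp (L*(u-a))" by (simp add: abs_divide)
        ultimately show ?thesis by simp
      qed
      moreover have "dist (apply_bcontfun (snd (\<Phi> v Y)) t) (apply_bcontfun (snd (\<Phi> w Y)) t) = \<bar>\<psi>2 v Y u - \<psi>2 w Y u\<bar>"
        by (simp only: app2 dist_real_def u_def)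
      ultimately show "dist (apply_bcontfun (snd (\<Phi> v Y)) t) (apply_bcontfun (snd (\<Phi> w Y)) t) \<le> \<bar>v - w\<bar>"
        by simp
    qed
    have "fst (\<Phi> v Y) = fst (\<Phi> w Y)" by (simp add: \<Phi>_def)
    then have "dist (\<Phi> v Y) (\<Phi> w Y) = dist (snd (\<Phi> v Y)) (snd (\<Phi> w Y))"
      by (cases "\<Phi> v Y", cases "\<Phi> w Y") (simp add: dist_Pair_Pair)
    with h2 show ?thesis by simp
  qed
  have fxdep: "dist (fx v) (fx w) \<le> 2 * \<bar>v - w\<bar>" for v w
  proof -
    have "dist (fx v) (fx w) \<le> dist (\<Phi> v (fx v)) (\<Phi> w (fx v)) + dist (\<Phi> w (fx v)) (\<Phi> w (fx w))"
      using dist_triangle[of "fx v" "fx w" "\<Phi> w (fx v)"] dist_triangle[of "fx v" "\<Phi> w (fx w)" "\<Phi> v (fx v)"] fx[of v] fx[of w] by simp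
    also have "\<dots> \<le> \<bar>v - w\<bar> + 1/2 * dist (fx v) (fx w)" using dep contr by (intro add_mono)
    finally show ?thesis by simp
  qed
  define R where "R v t = RR (fx v) t" for v t
  define P where "P v t = PP (fx v) t" for v t
  have eqR: "R v t = r0 + integral {a..t} (\<lambda>s. F1 (R v s) (P v s))" if t: "t \<in> {a..b}" for v t
  proof -
    have ap: "apply_bcontfun (fst (fx v)) t = \<psi>1 (fx v) t"
      using app1[of v "fx v" t] fx[of v] clampI_id[OF t] by simp
    have "R v t = E t * \<psi>1 (fx v) t" by (simp add: R_def RR_def ap)
    also have "\<dots> = r0 + integral {a..t} (\<lambda>s. F1 (RR (fx v) s) (PP (fx v) s))"
      using Eid[OF t] by (simp add: \<psi>1_def)
    also have "\<dots> = r0 + integral {a..t} (\<lambda>s. F1 (R v s) (P v s))" by (simp add: R_def P_def)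
    finally show ?thesis .
  qed
  have eqP: "P v t = v + integral {a..t} (\<lambda>s. F2 (R v s) (P v s))" if t: "t \<in> {a..b}" for v t
  proof -
    have ap: "apply_bcontfun (snd (fx v)) t = \<psi>2 v (fx v) t"
      using app2[of v "fx v" t] fx[of v] clampI_id[OF t] by simp
    have "P v t = E t * \<psi>2 v (fx v) t" by (simp add: P_def PP_def ap)
    also have "\<dots> = v + integral {a..t} (\<lambda>s. F2 (RR (fx v) s) (PP (fx v) s))"
      using Eid[OF t] by (simp add: \<psi>2_def)
    also have "\<dots> = v + integral {a..t} (\<lambda>s. F2 (R v s) (P v s))" by (simp add: R_def P_def)
    finally show ?thesis .
  qed
  have cR: "continuous_on UNIV (R v)" "continuous_on UNIV (P v)" for v
    unfolding R_def P_def using cRR by auto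
  have "lipschitz_on (2 * E b) UNIV (\<lambda>v. R v b)"
  proof (rule lipschitz_onI)
    fix v w :: real
    have "dist (R v b) (R w b) = E b * dist (apply_bcontfun (fst (fx v)) b) (apply_bcontfun (fst (fx w)) b)"
      using E1[of b] by (simp add: R_def RR_def dist_real_def right_diff_distrib[symmetric] abs_mult)
    also have "\<dots> \<le> E b * dist (fx v) (fx w)"
      using E1[of b] order_trans[OF dist_bounded[of "fst (fx v)" b "fst (fx w)"] dist_fst_le[of "fx v" "fx w"]] by (intro mult_left_mono) auto
    also have "\<dots> \<le> E b * (2 * \<bar>v - w\<bar>)" using E1[of b] fxdep by (intro mult_left_mono) auto
    finally show "dist (R v b) (R w b) \<le> 2 * E b * dist v w" by (simp add: dist_real_def)
  next
    show "0 \<le> 2 * E b" using E1[of b] by simp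
  qed
  then have cb: "continuous_on UNIV (\<lambda>v. R v b)" by (rule lipschitz_on_continuous_on)
  show ?thesis
    by (rule exI[of _ R], rule exI[of _ P]) (use eqR eqP cR cb in blast)
qed

lemma antider:
  fixes \<delta> :: "real \<Rightarrow> real"
  assumes c: "c > 0" and cont: "continuous_on {0<..} \<delta>"
    and bd: "\<And>x. x > 0 \<Longrightarrow> 0 \<le> \<delta> x \<and> \<delta> x \<le> M"
  shows antider_deriv: "\<And>x. x > c \<Longrightarrow> ((\<lambda>u. integral {c..u} \<delta>) has_real_derivative \<delta> x) (at x)"
    and antider_lip: "\<And>x y. c \<le> x \<Longrightarrow> x \<le> y \<Longrightarrow>
       0 \<le> integral {c..y} \<delta> - integral {c..x} \<delta> \<and> integral {c..y} \<delta> - integral {c..x} \<delta> \<le> M*(y-x)"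
proof -
  have sub: "{a..b} \<subseteq> {0<..}" if "a > 0" for a b :: real using that by auto
  have ci: "continuous_on {a..b} \<delta>" if "a > 0" for a b :: real
    by (rule continuous_on_subset[OF cont sub[OF that]])
  fix x assume x: "x > c"
  have "((\<lambda>u. integral {c..u} \<delta>) has_real_derivative \<delta> x) (at x within {c..x+1})"
    by (rule integral_has_real_derivative[OF ci[OF c]]) (use x in auto)
  then show "((\<lambda>u. integral {c..u} \<delta>) has_real_derivative \<delta> x) (at x)"
    using at_within_Icc_at[of c x "x+1"] x by simp
next
  have sub: "{a..b} \<subseteq> {0<..}" if "a > 0" for a b :: real using that by auto
  have ci: "continuous_on {a..b} \<delta>" if "a > 0" for a b :: real
    by (rule continuous_on_subset[OF cont sub[OF that]])
  fix x y assume xy: "c \<le> x" "x \<le> y"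
  have "integral {c..x} \<delta> + integral {x..y} \<delta> = integral {c..y} \<delta>"
    by (rule Henstock_Kurzweil_Integration.integral_combine[OF xy]) (rule integrable_continuous_real[OF ci[OF c]])
  then have e: "integral {c..y} \<delta> - integral {c..x} \<delta> = integral {x..y} \<delta>" by simp
  have x0: "x > 0" using xy c by simp
  have int: "\<delta> integrable_on {x..y}" by (rule integrable_continuous_real[OF ci[OF x0]])
  have "0 \<le> integral {x..y} \<delta>" by (rule integral_nonneg[OF int]) (use bd x0 in auto)
  moreover have "integral {x..y} \<delta> \<le> integral {x..y} (\<lambda>_. M)"
    by (rule integral_le[OF int]) (use bd x0 in auto)
  moreover have "integral {x..y} (\<lambda>_. M) = M*(y-x)" using xy by (simp add: content_real)
  ultimately show "0 \<le> integral {c..y} \<delta> - integral {c..x} \<delta> \<and> integral {c..y} \<delta> - integral {c..x} \<delta> \<le> M*(y-x)"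
    using e by linarith
qed

lemma inv_sq_mono: "0 < (y::real) \<Longrightarrow> y \<le> x \<Longrightarrow> 1/x\<^sup>2 \<le> 1/y\<^sup>2"
  by (simp add: frac_le power_mono)

lemma uniq_le:
  fixes \<delta> :: "real \<Rightarrow> real"
  assumes cont: "continuous_on {0<..} \<delta>" and bd: "\<And>x. x > 0 \<Longrightarrow> 0 \<le> \<delta> x \<and> \<delta> x \<le> M"
    and T: "T > 0"
    and s1: "bvp_solution \<delta> T rA rB r1" and s2: "bvp_solution \<delta> T rA rB r2"
  shows "\<forall>t\<in>{-T..0}. r1 t \<le> r2 t"
proof (rule ccontr)
  assume nle: "\<not> (\<forall>t\<in>{-T..0}. r1 t \<le> r2 t)"
  define I where "I = {-T..0}"
  have M0: "M \<ge> 0" using bd[of 1] by simp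
  obtain r1' r1'' where pos1: "\<And>t. t\<in>I \<Longrightarrow> r1 t > 0" and bc1: "r1 (-T) = rA" "r1 0 = rB"
    and d1: "\<And>t. t\<in>I \<Longrightarrow> (r1 has_real_derivative r1' t) (at t within I)"
    and d1': "\<And>t. t\<in>I \<Longrightarrow> (r1' has_real_derivative r1'' t) (at t within I)"
    and e1: "\<And>t. t\<in>I \<Longrightarrow> r1'' t + \<delta> (r1 t) * r1' t = - 1 / (r1 t)^2"
    using s1 unfolding bvp_solution_def I_def by metis
  obtain r2' r2'' where pos2: "\<And>t. t\<in>I \<Longrightarrow> r2 t > 0" and bc2: "r2 (-T) = rA" "r2 0 = rB"
    and d2: "\<And>t. t\<in>I \<Longrightarrow> (r2 has_real_derivative r2' t) (at t within I)"
    and d2': "\<And>t. t\<in>I \<Longrightarrow> (r2' has_real_derivative r2'' t) (at t within I)"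
    and e2: "\<And>t. t\<in>I \<Longrightarrow> r2'' t + \<delta> (r2 t) * r2' t = - 1 / (r2 t)^2"
    using s2 unfolding bvp_solution_def I_def by metis
  have cI: "compact I" "I \<noteq> {}" using T by (auto simp: I_def)
  have cr1: "continuous_on I r1" by (rule DERIV_continuous_on[OF d1])
  have cr2: "continuous_on I r2" by (rule DERIV_continuous_on[OF d2])
  obtain x1 where x1: "x1 \<in> I" "\<And>y. y \<in> I \<Longrightarrow> r1 x1 \<le> r1 y"
    using continuous_attains_inf[OF cI cr1] by blast
  obtain x2 where x2: "x2 \<in> I" "\<And>y. y \<in> I \<Longrightarrow> r2 x2 \<le> r2 y"
    using continuous_attains_inf[OF cI cr2] by blast
  define c where "c = min (r1 x1) (r2 x2) / 2"
  have c0: "c > 0" using pos1[OF x1(1)] pos2[OF x2(1)] by (simp add: c_def)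
  have gc1: "r1 t > c" if "t \<in> I" for t using x1(2)[OF that] pos1[OF x1(1)] by (simp add: c_def)
  have gc2: "r2 t > c" if "t \<in> I" for t using x2(2)[OF that] pos2[OF x2(1)] by (simp add: c_def)
  define D where "D = (\<lambda>u. integral {c..u} \<delta>)"
  have Dd: "\<And>x. x > c \<Longrightarrow> (D has_real_derivative \<delta> x) (at x)"
    unfolding D_def by (rule antider_deriv[OF c0 cont bd])
  have Dl: "\<And>x y. c \<le> x \<Longrightarrow> x \<le> y \<Longrightarrow> 0 \<le> D y - D x \<and> D y - D x \<le> M*(y-x)"
    unfolding D_def by (rule antider_lip[OF c0 cont bd])
  define u where "u = (\<lambda>t. (r1' t + D (r1 t)) - (r2' t + D (r2 t)))"
  define ud where "ud t = (- 1 / (r1 t)^2) - (- 1 / (r2 t)^2)" for t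
  have du: "(u has_real_derivative ud t) (at t within I)" if t: "t \<in> I" for t
  proof -
    have c1: "((\<lambda>t. D (r1 t)) has_real_derivative \<delta> (r1 t) * r1' t) (at t within I)"
      by (rule DERIV_chain2[OF Dd[OF gc1[OF t]] d1[OF t]])
    have c2: "((\<lambda>t. D (r2 t)) has_real_derivative \<delta> (r2 t) * r2' t) (at t within I)"
      by (rule DERIV_chain2[OF Dd[OF gc2[OF t]] d2[OF t]])
    have "(u has_real_derivative (r1'' t + \<delta> (r1 t) * r1' t) - (r2'' t + \<delta> (r2 t) * r2' t)) (at t within I)"
      unfolding u_def by (intro DERIV_diff DERIV_add d1'[OF t] d2'[OF t] c1 c2)
    then show ?thesis by (simp only: e1[OF t] e2[OF t] ud_def)
  qed
  have cu: "continuous_on I u" by (rule DERIV_continuous_on[OF du])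
  define w where "w = (\<lambda>t. r1 t - r2 t)"
  have dw: "(w has_real_derivative r1' t - r2' t) (at t within I)" if t: "t \<in> I" for t
    unfolding w_def by (intro DERIV_diff d1 d2 t)
  have cw: "continuous_on I w" by (rule DERIV_continuous_on[OF dw])
  obtain ts where ts: "ts \<in> I" "\<And>y. y \<in> I \<Longrightarrow> w y \<le> w ts"
    using continuous_attains_sup[OF cI cw] by blast
  have wts: "w ts > 0" using nle ts(2) by (force simp: I_def w_def)
  have tsT: "-T < ts" "ts < 0"
    using ts(1) wts bc1 bc2 by (auto simp: I_def w_def less_le)
  have atI: "at x within I = at x" if "-T < x" "x < 0" for x
    unfolding I_def by (rule at_within_Icc_at[OF that])
  have "r1' ts - r2' ts = 0"
  proof (rule DERIV_local_max)
    show "(w has_real_derivative r1' ts - r2' ts) (at ts)" using dw[OF ts(1)] atI[OF tsT] by simp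
    show "0 < min (ts + T) (- ts)" using tsT by simp
    show "\<forall>y. \<bar>ts - y\<bar> < min (ts + T) (- ts) \<longrightarrow> w y \<le> w ts"
      using ts(2) by (auto simp: I_def abs_if split: if_splits)
  qed
  then have uts: "u ts \<ge> 0"
    using Dl[of "r2 ts" "r1 ts"] gc2[OF ts(1)] wts by (simp add: u_def w_def)
  define S where "S = {ts..0} \<inter> w -` {..0}"
  have sI: "{ts..0} \<subseteq> I" using tsT by (auto simp: I_def)
  have clS: "closed S" unfolding S_def
    by (rule continuous_closed_preimage[OF continuous_on_subset[OF cw sI]]) auto
  have S0: "0 \<in> S" using bc1 bc2 tsT by (simp add: S_def w_def)
  have bS: "bdd_below S" unfolding S_def by (rule bdd_belowI[of _ ts]) auto
  define t1 where "t1 = Inf S"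
  have t1S: "t1 \<in> S" unfolding t1_def using closed_contains_Inf[OF _ bS clS] S0 by blast
  then have t1: "ts \<le> t1" "t1 \<le> 0" "w t1 \<le> 0" by (auto simp: S_def)
  have wpos: "w t > 0" if "ts \<le> t" "t < t1" for t
  proof (rule ccontr)
    assume "\<not> w t > 0"
    then have "t \<in> S" using that t1 by (auto simp: S_def)
    then have "t1 \<le> t" unfolding t1_def by (rule cInf_lower[OF _ bS])
    with that show False by simp
  qed
  have ts_t1: "ts < t1" using t1 wts by (cases "ts = t1") auto
  have umono: "u ts \<le> u t" if "ts \<le> t" "t \<le> t1" for t
  proof (rule DERIV_nonneg_imp_increasing_open[OF that(1)])
    fix x assume x: "ts < x" "x < t"
    have xI: "-T < x" "x < 0" using x tsT that t1 by auto
    have "(u has_real_derivative ud x) (at x)" using du[of x] xI atI[OF xI] by (simp add: I_def)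
    moreover have "ud x \<ge> 0"
    proof -
      have "w x > 0" using wpos[of x] x that by simp
      then have "1/(r1 x)^2 \<le> 1/(r2 x)^2" using pos2[of x] xI
        by (intro inv_sq_mono) (auto simp: w_def I_def)
      then show ?thesis by (simp add: ud_def)
    qed
    ultimately show "\<exists>y. (u has_real_derivative y) (at x) \<and> 0 \<le> y" by blast
  next
    show "continuous_on {ts..t} u"
      by (rule continuous_on_subset[OF cu]) (use tsT that t1 in \<open>auto simp: I_def\<close>)
  qed
  define h where "h = (\<lambda>t. w t * exp (M * t))"
  have dh: "(h has_real_derivative (r1' t - r2' t) * exp (M*t) + w t * (exp (M*t) * M)) (at t within I)"
    if t: "t \<in> I" for t
  proof -
    have "((\<lambda>t. exp (M*t)) has_real_derivative exp (M*t) * M) (at t within I)"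
      by (auto intro!: derivative_eq_intros)
    from DERIV_mult[OF dw[OF t] this] show ?thesis unfolding h_def by (simp add: mult_ac)
  qed
  have "h ts \<le> h t1"
  proof (rule DERIV_nonneg_imp_increasing_open[OF t1(1)])
    fix x assume x: "ts < x" "x < t1"
    have xI: "-T < x" "x < 0" using x tsT t1 by auto
    have wx: "w x > 0" using wpos[of x] x by simp
    have "(h has_real_derivative (r1' x - r2' x) * exp (M*x) + w x * (exp (M*x) * M)) (at x)"
      using dh[of x] xI atI[OF xI] by (simp add: I_def)
    moreover have "(r1' x - r2' x) * exp (M*x) + w x * (exp (M*x) * M) \<ge> 0"
    proof -
      have "u x \<ge> 0" using umono[of x] x uts by simp
      moreover have "D (r1 x) - D (r2 x) \<le> M * w x"
        using Dl[of "r2 x" "r1 x"] gc2[of x] wx xI by (simp add: w_def I_def)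
      ultimately have "r1' x - r2' x + M * w x \<ge> 0" by (simp add: u_def)
      then have "(r1' x - r2' x + M * w x) * exp (M*x) \<ge> 0" by simp
      then show ?thesis by (simp add: algebra_simps)
    qed
    ultimately show "\<exists>y. (h has_real_derivative y) (at x) \<and> 0 \<le> y" by blast
  next
    show "continuous_on {ts..t1} h"
      by (rule continuous_on_subset[OF DERIV_continuous_on[OF dh]]) (use tsT t1 in \<open>auto simp: I_def\<close>)
  qed
  moreover have "h ts > 0" using wts by (simp add: h_def)
  moreover have "h t1 \<le> 0" using t1(3) by (simp add: h_def mult_nonpos_nonneg)
  ultimately show False by simp
qed

lemma deriv_from_int:
  fixes f R :: "real \<Rightarrow> real"
  assumes f: "continuous_on {a..b} f" and t: "t \<in> {a..b}"
    and eq: "\<And>s. s \<in> {a..b} \<Longrightarrow> R s = r0 + integral {a..s} f"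
  shows "(R has_real_derivative f t) (at t within {a..b})"
proof -
  have "((\<lambda>s. r0 + integral {a..s} f) has_real_derivative 0 + f t) (at t within {a..b})"
    by (intro DERIV_add DERIV_const integral_has_real_derivative f t)
  then have "((\<lambda>s. r0 + integral {a..s} f) has_real_derivative f t) (at t within {a..b})" by simp
  then show ?thesis
    by (rule has_field_derivative_transform_within[where d=1]) (use t eq in auto)
qed

lemma g_lip:
  fixes m x y :: real
  assumes m: "m > 0"
  shows "\<bar>1/(max m x)^2 - 1/(max m y)^2\<bar> \<le> (2/m^3) * \<bar>x - y\<bar>"
proof -
  define X where "X = max m x"
  define Y where "Y = max m y"
  have X: "X \<ge> m" and Y: "Y \<ge> m" by (auto simp: X_def Y_def)
  have X0: "X > 0" and Y0: "Y > 0" using X Y m by auto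
  have XY: "\<bar>X - Y\<bar> \<le> \<bar>x - y\<bar>" by (auto simp: X_def Y_def)
  have id: "1/X^2 - 1/Y^2 = (Y - X) * (1/(X*Y^2) + 1/(X^2*Y))"
    using X0 Y0 by (simp add: field_simps power2_eq_square)
  have m3: "m^3 \<le> X*Y^2" "m^3 \<le> X^2*Y"
  proof -
    have "m^2 \<le> Y^2" "m^2 \<le> X^2" using X Y m by (auto intro: power_mono)
    have "m * m^2 \<le> X * Y^2" using X m \<open>m^2 \<le> Y^2\<close> by (intro mult_mono) auto
    then show "m^3 \<le> X*Y^2" by (simp add: power3_eq_cube power2_eq_square mult_ac)
    have "m^2 * m \<le> X^2 * Y" using Y m \<open>m^2 \<le> X^2\<close> by (intro mult_mono) auto
    then show "m^3 \<le> X^2*Y" by (simp add: power3_eq_cube power2_eq_square mult_ac)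
  qed
  have b1: "1/(X*Y^2) \<le> 1/m^3" "1/(X^2*Y) \<le> 1/m^3"
    using m3 m X0 Y0 by (auto intro!: divide_left_mono mult_pos_pos)
  have pos: "0 \<le> 1/(X*Y^2) + 1/(X^2*Y)" using X0 Y0 by simp
  have "\<bar>1/X^2 - 1/Y^2\<bar> = \<bar>X - Y\<bar> * (1/(X*Y^2) + 1/(X^2*Y))"
    using pos by (simp add: id abs_mult abs_minus_commute)
  also have "\<dots> \<le> \<bar>x - y\<bar> * (2/m^3)"
    using b1 XY pos by (intro mult_mono) auto
  finally show ?thesis by (simp add: X_def Y_def mult.commute)
qed

lemma existence:
  fixes \<delta> :: "real \<Rightarrow> real"
  assumes cont: "continuous_on {0<..} \<delta>" and bd: "\<And>x. x > 0 \<Longrightarrow> 0 \<le> \<delta> x \<and> \<delta> x \<le> M"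
    and rA: "rA > 0" and rB: "rB > 0" and T: "T > 0"
  shows "\<exists>r. bvp_solution \<delta> T rA rB r"
proof -
  define I where "I = {-T..0}"
  have M0: "M \<ge> 0" using bd[of 1] by simp
  define m where "m = min rA rB / 2"
  have m0: "m > 0" and mA: "m < rA" and mB: "m < rB" using rA rB by (auto simp: m_def)
  define c where "c = m/2"
  have c0: "c > 0" and cm: "c < m" using m0 by (auto simp: c_def)
  define D where "D = (\<lambda>u. integral {c..u} \<delta>)"
  have Dd: "\<And>x. x > c \<Longrightarrow> (D has_real_derivative \<delta> x) (at x)"
    unfolding D_def by (rule antider_deriv[OF c0 cont bd])
  have Dl: "\<And>x y. c \<le> x \<Longrightarrow> x \<le> y \<Longrightarrow> 0 \<le> D y - D x \<and> D y - D x \<le> M*(y-x)"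
    unfolding D_def by (rule antider_lip[OF c0 cont bd])
  define Dm where "Dm x = D (max m x)" for x
  have Dm_mono: "Dm x \<le> Dm y" if "x \<le> y" for x y
    using Dl[of "max m x" "max m y"] that cm by (auto simp: Dm_def)
  have Dm_lip: "\<bar>Dm x - Dm y\<bar> \<le> M * \<bar>x - y\<bar>" for x y
  proof (cases "x \<le> y")
    case True
    then have "0 \<le> Dm y - Dm x \<and> Dm y - Dm x \<le> M*(max m y - max m x)"
      using Dl[of "max m x" "max m y"] cm by (auto simp: Dm_def)
    moreover have "M*(max m y - max m x) \<le> M * \<bar>x - y\<bar>" using M0 True by (intro mult_left_mono) auto
    ultimately show ?thesis by linarith
  next
    case False
    then have "0 \<le> Dm x - Dm y \<and> Dm x - Dm y \<le> M*(max m x - max m y)"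
      using Dl[of "max m y" "max m x"] cm by (auto simp: Dm_def)
    moreover have "M*(max m x - max m y) \<le> M * \<bar>x - y\<bar>" using M0 False by (intro mult_left_mono) auto
    ultimately show ?thesis by linarith
  qed
  have Dm_ge: "D m \<le> Dm x" for x using Dl[of m "max m x"] cm by (simp add: Dm_def)
  define g where "g x = 1/(max m x)^2" for x
  have g_pos: "g x > 0" for x using m0 by (simp add: g_def)
  have g_le: "g x \<le> 1/m^2" for x unfolding g_def by (rule inv_sq_mono[OF m0]) simp
  define F1 where "F1 = (\<lambda>r p. p - Dm r)"
  define F2 where "F2 = (\<lambda>(r::real) (p::real). - g r)"
  define K where "K = 1 + M + 2/m^3"
  have K0: "K \<ge> 0" using M0 m0 by (simp add: K_def)
  have L1: "\<bar>F1 x y - F1 u w\<bar> \<le> K*(\<bar>x-u\<bar>+\<bar>y-w\<bar>)" for x y u w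
  proof -
    have "\<bar>F1 x y - F1 u w\<bar> \<le> \<bar>y - w\<bar> + M * \<bar>x - u\<bar>"
      using Dm_lip[of x u] by (simp add: F1_def)
    also have "\<dots> \<le> K*\<bar>y - w\<bar> + K * \<bar>x - u\<bar>"
    proof (rule add_mono)
      have "1 \<le> K" "M \<le> K" using M0 m0 by (auto simp: K_def)
      then show "\<bar>y - w\<bar> \<le> K*\<bar>y - w\<bar>" "M * \<bar>x - u\<bar> \<le> K * \<bar>x - u\<bar>"
        using mult_right_mono[of 1 K "\<bar>y - w\<bar>"] mult_right_mono[of M K "\<bar>x - u\<bar>"] by auto
    qed
    finally show ?thesis by (simp add: algebra_simps)
  qed
  have L2: "\<bar>F2 x y - F2 u w\<bar> \<le> K*(\<bar>x-u\<bar>+\<bar>y-w\<bar>)" for x y u w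
  proof -
    have "\<bar>F2 x y - F2 u w\<bar> = \<bar>g u - g x\<bar>" by (simp add: F2_def)
    also have "\<dots> \<le> (2/m^3) * \<bar>u - x\<bar>" unfolding g_def by (rule g_lip[OF m0])
    also have "\<dots> \<le> K * \<bar>x - u\<bar>"
    proof -
      have "2/m^3 \<le> K" using M0 by (simp add: K_def)
      then show ?thesis using mult_right_mono[of "2/m^3" K "\<bar>x - u\<bar>"] by (simp add: abs_minus_commute)
    qed
    also have "\<dots> \<le> K*(\<bar>x-u\<bar>+\<bar>y-w\<bar>)" using K0 by (intro mult_left_mono) auto
    finally show ?thesis .
  qed
  have mT: "-T \<le> (0::real)" using T by simp
  obtain R P where eqR: "\<And>v t. t\<in>I \<Longrightarrow> R v t = rA + integral {-T..t} (\<lambda>s. F1 (R v s) (P v s))"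
    and eqP: "\<And>v t. t\<in>I \<Longrightarrow> P v t = v + integral {-T..t} (\<lambda>s. F2 (R v s) (P v s))"
    and cR: "\<And>v. continuous_on UNIV (R v)" and cP: "\<And>v. continuous_on UNIV (P v)"
    and cb: "continuous_on UNIV (\<lambda>v. R v 0)"
    using ivp[OF mT K0 L1 L2, of rA] unfolding I_def by blast
  have cF1: "continuous_on S (\<lambda>s. F1 (R v s) (P v s))" for S v
    by (rule cont_lip2[OF continuous_on_subset[OF cR] continuous_on_subset[OF cP] L1]) auto
  have cF2: "continuous_on S (\<lambda>s. F2 (R v s) (P v s))" for S v
    by (rule cont_lip2[OF continuous_on_subset[OF cR] continuous_on_subset[OF cP] L2]) auto
  have dR: "(R v has_real_derivative F1 (R v t) (P v t)) (at t within I)" if "t \<in> I" for v t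
    unfolding I_def by (rule deriv_from_int[OF cF1]) (use that eqR in \<open>auto simp: I_def\<close>)
  have dP: "(P v has_real_derivative F2 (R v t) (P v t)) (at t within I)" if "t \<in> I" for v t
    unfolding I_def by (rule deriv_from_int[OF cF2]) (use that eqP in \<open>auto simp: I_def\<close>)
  have int2: "(\<lambda>s. F2 (R v s) (P v s)) integrable_on {a..b}" for a b v
    by (intro integrable_continuous_real cF2)
  have atI: "at x within I = at x" if "-T < x" "x < 0" for x
    unfolding I_def by (rule at_within_Icc_at[OF that])
  have RT: "R v (-T) = rA" for v using eqR[of "-T" v] T by (simp add: I_def)
  have Pup: "P v t \<le> v" if t: "t \<in> I" for v t
  proof -
    have "integral {-T..t} (\<lambda>s. F2 (R v s) (P v s)) \<le> integral {-T..t} (\<lambda>s. 0)"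
      by (rule integral_le[OF int2]) (auto simp: F2_def g_pos less_imp_le)
    then show ?thesis using eqP[OF t, of v] by simp
  qed
  have Plo: "P v t \<ge> v - T/m^2" if t: "t \<in> I" for v t
  proof -
    have "integral {-T..t} (\<lambda>s. - 1/m^2) \<le> integral {-T..t} (\<lambda>s. F2 (R v s) (P v s))"
      by (rule integral_le[OF _ int2]) (auto simp: F2_def g_le)
    moreover have "integral {-T..t} (\<lambda>s. - 1/m^2) = - ((t + T)/m^2)" using t by (simp add: I_def content_real)
    moreover have "(t + T)/m^2 \<le> T/m^2" using t by (intro divide_right_mono) (auto simp: I_def)
    ultimately show ?thesis using eqP[OF t, of v] by linarith
  qed
  have Rup: "R v 0 \<le> rA + T*(v - D m)" for v
  proof -
    have "integral {-T..0} (\<lambda>s. F1 (R v s) (P v s)) \<le> integral {-T..0} (\<lambda>s. v - D m)"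
    proof (rule integral_le)
      show "(\<lambda>s. F1 (R v s) (P v s)) integrable_on {-T..0}" by (intro integrable_continuous_real cF1)
      show "(\<lambda>s. v - D m) integrable_on {-T..0}" by (intro integrable_continuous_real continuous_intros)
      fix s assume "s \<in> {-T..0}"
      then show "F1 (R v s) (P v s) \<le> v - D m" using Pup[of s v] Dm_ge[of "R v s"] by (simp add: F1_def I_def)
    qed
    then show ?thesis using eqR[of 0 v] T by (simp add: I_def content_real mult.commute)
  qed
  define vlo where "vlo = D m + (rB - rA)/T"
  have flo: "R vlo 0 \<le> rB" using Rup[of vlo] T by (simp add: vlo_def)
  define Rx where "Rx = max rA rB"
  have lowR: "R v 0 \<ge> Rx" if v: "v \<ge> T/m^2 + Dm Rx + (Rx - rA)/T" for v
  proof (rule ccontr)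
    assume "\<not> Rx \<le> R v 0"
    then have R0: "R v 0 < Rx" by simp
    define K0 where "K0 = v - T/m^2 - Dm Rx"
    have K0a: "K0 \<ge> (Rx - rA)/T" using v by (simp add: K0_def)
    have K0b: "K0 \<ge> 0" using K0a T by (smt (verit) Rx_def divide_nonneg_pos max.cobounded1)
    define S where "S = {-T} \<union> ({-T..0} \<inter> R v -` {Rx..})"
    have clS: "closed S" unfolding S_def
      by (intro closed_Un closed_singleton continuous_closed_preimage continuous_on_subset[OF cR]) auto
    have bS: "bdd_above S" unfolding S_def by (rule bdd_aboveI[of _ 0]) (use T in auto)
    define t1 where "t1 = Sup S"
    have t1S: "t1 \<in> S" unfolding t1_def by (rule closed_contains_Sup[OF _ bS clS]) (simp add: S_def)
    have t1I: "-T \<le> t1" "t1 \<le> 0" using t1S T by (auto simp: S_def)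
    have after: "R v t < Rx" if "t1 < t" "t \<le> 0" for t
    proof (rule ccontr)
      assume "\<not> R v t < Rx"
      then have "t \<in> S" using that t1I by (auto simp: S_def)
      then have "t \<le> t1" unfolding t1_def by (rule cSup_upper[OF _ bS])
      with that show False by simp
    qed
    have "t1 \<noteq> 0" using t1S R0 T by (auto simp: S_def)
    then have t1n: "t1 < 0" using t1I by simp
    have "(\<lambda>t. R v t - K0 * t) t1 \<le> (\<lambda>t. R v t - K0 * t) 0"
    proof (rule DERIV_nonneg_imp_increasing_open[OF t1I(2)])
      fix x assume x: "t1 < x" "x < 0"
      have xI: "-T < x" "x < 0" using x t1I by auto
      have dd1: "(R v has_real_derivative F1 (R v x) (P v x)) (at x)"
        using dR[of x v] xI atI[OF xI] by (simp add: I_def)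
      have dd2: "((\<lambda>t. K0 * t) has_real_derivative K0 * 1) (at x)"
        by (intro DERIV_cmult DERIV_ident)
      have "((\<lambda>t. R v t - K0 * t) has_real_derivative F1 (R v x) (P v x) - K0 * 1) (at x)"
        by (rule DERIV_diff[OF dd1 dd2])
      moreover have "F1 (R v x) (P v x) - K0 * 1 \<ge> 0"
        using Plo[of x v] Dm_mono[of "R v x" Rx] after[of x] x xI by (simp add: F1_def K0_def I_def)
      ultimately show "\<exists>y. ((\<lambda>t. R v t - K0 * t) has_real_derivative y) (at x) \<and> 0 \<le> y" by blast
    next
      show "continuous_on {t1..0} (\<lambda>t. R v t - K0 * t)"
        by (intro continuous_intros continuous_on_subset[OF cR]) auto
    qed
    then have ineq: "R v t1 - K0 * t1 \<le> R v 0" by simp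
    show False
    proof (cases "t1 = -T")
      case True
      have "K0 * T \<ge> Rx - rA" using K0a T by (simp add: divide_le_eq mult.commute)
      then show ?thesis using ineq True RT[of v] R0 by simp
    next
      case False
      then have "R v t1 \<ge> Rx" using t1S by (auto simp: S_def)
      moreover have "K0 * t1 \<le> 0" using K0b t1I by (simp add: mult_nonneg_nonpos)
      ultimately show ?thesis using ineq R0 by simp
    qed
  qed
  define vhi where "vhi = max vlo (T/m^2 + Dm Rx + (Rx - rA)/T)"
  have fhi: "rB \<le> R vhi 0" using lowR[of vhi] by (simp add: vhi_def Rx_def)
  obtain v0 where v0: "R v0 0 = rB"
    using IVT'[of "\<lambda>v. R v 0" vlo rB vhi] flo fhi continuous_on_subset[OF cb] by (auto simp: vhi_def)
  define r where "r = R v0"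
  define p where "p = P v0"
  have dr: "t \<in> I \<Longrightarrow> (r has_real_derivative F1 (r t) (p t)) (at t within I)" for t
    unfolding r_def p_def by (rule dR)
  have dp: "t \<in> I \<Longrightarrow> (p has_real_derivative F2 (r t) (p t)) (at t within I)" for t
    unfolding r_def p_def by (rule dP)
  have cr: "continuous_on S r" for S unfolding r_def by (rule continuous_on_subset[OF cR]) auto
  have cp: "continuous_on S p" for S unfolding p_def by (rule continuous_on_subset[OF cP]) auto
  have rT: "r (-T) = rA" by (simp add: r_def RT)
  have r0: "r 0 = rB" by (simp add: r_def v0)
  have rm: "r t \<ge> m" if t: "t \<in> I" for t
  proof (rule ccontr)
    assume "\<not> r t \<ge> m"
    have cI: "compact I" "I \<noteq> {}" using T by (auto simp: I_def)
    obtain t0 where t0: "t0 \<in> I" "\<And>y. y \<in> I \<Longrightarrow> r t0 \<le> r y"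
      using continuous_attains_inf[OF cI cr] by blast
    have rt0: "r t0 < m" using t0(2)[OF t] \<open>\<not> r t \<ge> m\<close> by simp
    have t0i: "-T < t0" "t0 < 0" using t0(1) rt0 rT r0 mA mB by (auto simp: I_def less_le)
    have "F1 (r t0) (p t0) = 0"
    proof (rule DERIV_local_min)
      show "(r has_real_derivative F1 (r t0) (p t0)) (at t0)" using dr[OF t0(1)] atI[OF t0i] by simp
      show "0 < min (t0 + T) (- t0)" using t0i by simp
      show "\<forall>y. \<bar>t0 - y\<bar> < min (t0 + T) (- t0) \<longrightarrow> r t0 \<le> r y"
        using t0(2) by (auto simp: I_def abs_if split: if_splits)
    qed
    then have pt0: "p t0 - D m = 0" using rt0 by (simp add: F1_def Dm_def max_def)
    have "isCont r t0" using cr[of UNIV] by (simp add: continuous_on_eq_continuous_at)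
    then have "\<forall>\<^sub>F x in at t0. r x < m" using rt0 by (intro order_tendstoD(2)) (auto simp: isCont_def)
    then obtain d where d: "d > 0" "\<And>x. x \<noteq> t0 \<Longrightarrow> dist x t0 < d \<Longrightarrow> r x < m"
      by (auto simp: eventually_at)
    define t2 where "t2 = min (t0 + d/2) (t0/2)"
    have t2: "t0 < t2" "t2 < 0" "t2 - t0 < d" using d t0i by (auto simp: t2_def)
    have rsmall: "r y < m" if "t0 < y" "y \<le> t2" for y
      using d(2)[of y] that t2 by (auto simp: dist_real_def)
    have pdec: "p y < p t0" if "t0 < y" "y \<le> t2" for y
    proof (rule DERIV_neg_imp_decreasing_open[OF that(1)])
      fix x assume x: "t0 < x" "x < y"
      have xI: "-T < x" "x < 0" using x t0i t2 that by auto
      have "(p has_real_derivative F2 (r x) (p x)) (at x)" using dp[of x] xI atI[OF xI] by (simp add: I_def)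
      moreover have "F2 (r x) (p x) < 0" using g_pos by (simp add: F2_def)
      ultimately show "\<exists>z. (p has_real_derivative z) (at x) \<and> z < 0" by blast
    qed (rule cp)
    have "r t2 < r t0"
    proof (rule DERIV_neg_imp_decreasing_open[OF t2(1)])
      fix x assume x: "t0 < x" "x < t2"
      have xI: "-T < x" "x < 0" using x t0i t2 by auto
      have "(r has_real_derivative F1 (r x) (p x)) (at x)" using dr[of x] xI atI[OF xI] by (simp add: I_def)
      moreover have "F1 (r x) (p x) < 0"
        using rsmall[of x] pdec[of x] x pt0 by (simp add: F1_def Dm_def max_def)
      ultimately show "\<exists>z. (r has_real_derivative z) (at x) \<and> z < 0" by blast
    qed (rule cr)
    moreover have "t2 \<in> I" using t2 t0i by (auto simp: I_def)
    ultimately show False using t0(2) by fastforce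
  qed
  define r' where "r' t = p t - D (r t)" for t
  define r'' where "r'' t = - g (r t) - \<delta> (r t) * F1 (r t) (p t)" for t
  have F1r: "F1 (r t) (p t) = r' t" if "t \<in> I" for t
    using rm[OF that] by (simp add: F1_def Dm_def r'_def max_def)
  have gr: "g (r t) = 1/(r t)^2" if "t \<in> I" for t
    using rm[OF that] by (simp add: g_def max_def)
  have sol: "\<forall>t\<in>I. (r has_real_derivative r' t) (at t within I) \<and>
        (r' has_real_derivative r'' t) (at t within I) \<and>
        r'' t + \<delta> (r t) * r' t = - 1 / (r t)^2"
  proof
    fix t assume t: "t \<in> I"
    have rc: "r t > c" using rm[OF t] cm by simp
    have a1: "(r has_real_derivative r' t) (at t within I)" using dr[OF t] F1r[OF t] by simp
    have "((\<lambda>t. D (r t)) has_real_derivative \<delta> (r t) * F1 (r t) (p t)) (at t within I)"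
      by (rule DERIV_chain2[OF Dd[OF rc] dr[OF t]])
    from DERIV_diff[OF dp[OF t] this]
    have a2: "(r' has_real_derivative r'' t) (at t within I)"
      unfolding r'_def[abs_def] r''_def by (simp add: F2_def)
    have a3: "r'' t + \<delta> (r t) * r' t = - 1 / (r t)^2"
      using F1r[OF t] gr[OF t] by (simp add: r''_def)
    show "(r has_real_derivative r' t) (at t within I) \<and>
        (r' has_real_derivative r'' t) (at t within I) \<and>
        r'' t + \<delta> (r t) * r' t = - 1 / (r t)^2" using a1 a2 a3 by blast
  qed
  have "bvp_solution \<delta> T rA rB r"
    unfolding bvp_solution_def
  proof (intro conjI)
    show "\<forall>t\<in>{-T..0}. 0 < r t" using rm m0 by (force simp: I_def)
    show "r (-T) = rA" by (rule rT)
    show "r 0 = rB" by (rule r0)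
    show "\<exists>r' r''. \<forall>t\<in>{-T..0}. (r has_real_derivative r' t) (at t within {-T..0}) \<and>
        (r' has_real_derivative r'' t) (at t within {-T..0}) \<and> r'' t + \<delta> (r t) * r' t = - 1 / (r t)^2"
      using sol unfolding I_def by blast
  qed
  then show ?thesis by blast
qed

theorem corollary3p3:
  fixes \<delta> :: "real \<Rightarrow> real"
  assumes "\<delta> C1_differentiable_on {0<..}"
    and "\<And>x. x > 0 \<Longrightarrow> \<delta> x \<ge> 0"
    and "bounded (\<delta> ` {0<..})"
    and "rA > 0" and "rB > 0" and "T > 0"
  shows "\<exists>r. bvp_solution \<delta> T rA rB r \<and>
           (\<forall>s. bvp_solution \<delta> T rA rB s \<longrightarrow> (\<forall>t\<in>{-T..0}. s t = r t))"
proof -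
  have cont: "continuous_on {0<..} \<delta>"
    using assms(1) unfolding C1_differentiable_on_eq
    by (auto intro!: continuous_at_imp_continuous_on differentiable_imp_continuous_within)
  obtain B where B: "\<forall>x\<in>\<delta> ` {0<..}. norm x \<le> B" using assms(3) unfolding bounded_iff by blast
  have bd: "\<And>x. x > 0 \<Longrightarrow> 0 \<le> \<delta> x \<and> \<delta> x \<le> B" using B assms(2) by force
  obtain r where r: "bvp_solution \<delta> T rA rB r" using existence[OF cont bd assms(4-6)] by blast
  show ?thesis
  proof (intro exI[of _ r] conjI allI impI ballI)
    show "bvp_solution \<delta> T rA rB r" by (rule r)
    fix s t assume s: "bvp_solution \<delta> T rA rB s" and t: "t \<in> {-T..0}"
    show "s t = r t"
      using uniq_le[OF cont bd assms(6) s r] uniq_le[OF cont bd assms(6) r s] t by (meson antisym)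
  qed
qed

end
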